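(* Fix a master $m$ and workers $n=1,\dots,N$ with parameters $L_m>0$, $u_{m,n}>0$, $a_{m,n}>0$. For a variable ${\boldsymbol{w}}=(l,k,t)$ with $l>0$ and parameter $u>0$ define $$g^{+}({\boldsymbol{w}})=\tfrac12(k^2+l^2),\quad g^{-}({\boldsymbol{w}})=\tfrac12(k+l)^2,\quad h^{+}({\boldsymbol{w}})=\tfrac12\left(k+le^{-\frac{ut}{l}}\right)^2,\quad h^{-}({\boldsymbol{w}})=\tfrac12\left(k^2+l^2e^{-\frac{2ut}{l}}\right),$$ and for points ${\boldsymbol{w}},{\boldsymbol{z}}$ $$\tilde g({\boldsymbol{w}},{\boldsymbol{z}})=g^{+}({\boldsymbol{w}})-g^{-}({\boldsymbol{z}})-\nabla g^{-}({\boldsymbol{z}})^T({\boldsymbol{w}}-{\boldsymbol{z}}),\qquad \tilde h({\boldsymbol{w}},{\boldsymbol{z}})=h^{+}({\boldsymbol{w}})-h^{-}({\boldsymbol{z}})-\nabla h^{-}({\boldsymbol{z}})^T({\boldsymbol{w}}-{\boldsymbol{z}}).$$ Write $\tilde g_{m,n},\tilde h_{m,n}$ for these with $u=u_{m,n}$ and ${\boldsymbol{w}}_{m,n}=(l_{m,n},k_{m,n},t)$, ${\boldsymbol{z}}_{m,n}$ a point of the same form; let ${\boldsymbol{w}}_m=({\boldsymbol{w}}_{m,1},\dots,{\boldsymbol{w}}_{m,N})$, ${\boldsymbol{z}}_m=({\boldsymbol{z}}_{m,1},\dots,{\boldsymbol{z}}_{m,N})$ (sharing the common coordinate $t$). Let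 $$\mathbb{E}[X_m(t)]=\sum_{n=1}^N k_{m,n}l_{m,n}\left(1-e^{-\frac{u_{m,n}}{l_{m,n}}(t-a_{m,n}l_{m,n})}\right).$$ Then for all such ${\boldsymbol{w}}_m,{\boldsymbol{z}}_m$, $$L_m-\mathbb{E}[X_m(t)]\le L_m+\sum_{n=1}^N\left[\tilde g_{m,n}({\boldsymbol{w}}_{m,n},{\boldsymbol{z}}_{m,n})+e^{u_{m,n}a_{m,n}}\tilde h_{m,n}({\boldsymbol{w}}_{m,n},{\boldsymbol{z}}_{m,n})\right]=:\tilde q_m({\boldsymbol{w}}_m,{\boldsymbol{z}}_m),$$ and $\tilde q_m(\cdot,{\boldsymbol{z}}_m)$ is a convex function of ${\boldsymbol{w}}_m$.
   Context: Setting: probabilistic worker assignment in a coded distributed computing system, where worker $n$ serves master $m$ with probability $k_{m,n}\in[0,1]$ and is allocated $l_{m,n}>0$ coded rows; $\mathbb{E}[X_m(t)]$ is the (simplified) expected number of results master $m$ has received by time $t$. Gradients $\nabla$ are with respect to ${\boldsymbol{w}}=(l,k,t)$. *)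

theory Defs
  imports "HOL-Analysis.Analysis"
begin

definition g_plus :: "real \<times> real \<times> real \<Rightarrow> real" where
  "g_plus w = (case w of (l, k, t) \<Rightarrow> (k^2 + l^2) / 2)"

definition g_minus :: "real \<times> real \<times> real \<Rightarrow> real" where
  "g_minus w = (case w of (l, k, t) \<Rightarrow> (k + l)^2 / 2)"

definition h_plus :: "real \<Rightarrow> real \<times> real \<times> real \<Rightarrow> real" where
  "h_plus u w = (case w of (l, k, t) \<Rightarrow> (k + l * exp (- (u * t / l)))^2 / 2)"

definition h_minus :: "real \<Rightarrow> real \<times> real \<times> real \<Rightarrow> real" where
  "h_minus u w = (case w of (l, k, t) \<Rightarrow> (k^2 + l^2 * exp (- (2 * u * t / l))) / 2)"

definition g_tilde :: "real \<times> real \<times> real \<Rightarrow> real \<times> real \<times> real \<Rightarrow> real" where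
  "g_tilde w z = g_plus w - g_minus z - frechet_derivative g_minus (at z) (w - z)"

definition h_tilde :: "real \<Rightarrow> real \<times> real \<times> real \<Rightarrow> real \<times> real \<times> real \<Rightarrow> real" where
  "h_tilde u w z = h_plus u w - h_minus u z - frechet_derivative (h_minus u) (at z) (w - z)"

text \<open>Workers are indexed by a finite type 'n (N = CARD('n)); the variable of master m is
  w_m = (l, k, t) with l, k :: real^'n and the shared coordinate t.\<close>

definition expected_X :: "real^'n \<Rightarrow> real^'n \<Rightarrow> real^'n \<Rightarrow> real^'n \<Rightarrow> real \<Rightarrow> real" where
  "expected_X u a l k t =
     (\<Sum>n\<in>UNIV. k$n * l$n * (1 - exp (- (u$n / l$n) * (t - a$n * l$n))))"

definition q_tilde :: "real \<Rightarrow> real^'n \<Rightarrow> real^'n \<Rightarrow>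
    (real^'n) \<times> (real^'n) \<times> real \<Rightarrow> (real^'n) \<times> (real^'n) \<times> real \<Rightarrow> real" where
  "q_tilde L u a w z = (case w of (l, k, t) \<Rightarrow> case z of (l', k', t') \<Rightarrow>
     L + (\<Sum>n\<in>UNIV. g_tilde (l$n, k$n, t) (l'$n, k'$n, t')
                   + exp (u$n * a$n) * h_tilde (u$n) (l$n, k$n, t) (l'$n, k'$n, t')))"

definition admissible :: "((real^'n) \<times> (real^'n) \<times> real) set" where
  "admissible = {(l, k, t). \<forall>n. l$n > 0 \<and> 0 \<le> k$n \<and> k$n \<le> 1}"

end

theory Submission imports Defs begin

lemma gm_fun: "g_minus = (\<lambda>w. (fst (snd w) + fst w)^2/2)"
  by (auto simp: g_minus_def fun_eq_iff split: prod.splits)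

lemma hm_fun: "h_minus u = (\<lambda>w. ((fst (snd w))^2 + (fst w)^2 * exp (- (2 * u * snd (snd w) / fst w)))/2)"
  by (auto simp: h_minus_def fun_eq_iff split: prod.splits)

lemma gm_D: "frechet_derivative g_minus (at (l,k,t)) d = (k+l) * (fst (snd d) + fst d)"
proof -
  have "(g_minus has_derivative (\<lambda>d. (k+l) * (fst (snd d) + fst d))) (at (l,k,t))"
    unfolding gm_fun
    by (auto intro!: derivative_eq_intros simp: fun_eq_iff algebra_simps)
  from frechet_derivative_at[OF this, symmetric] show ?thesis by simp
qed

lemma hm_D: assumes "l > 0"
  shows "frechet_derivative (h_minus u) (at (l,k,t)) d =
     k * fst (snd d) + exp (- (2*u*t/l)) * ((l + u*t) * fst d - u * l * snd (snd d))"
proof -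
  have "(h_minus u has_derivative (\<lambda>d. k * fst (snd d) + exp (- (2*u*t/l)) * ((l + u*t) * fst d - u * l * snd (snd d)))) (at (l,k,t))"
    unfolding hm_fun
    apply (rule has_derivative_eq_rhs)
     apply (auto intro!: derivative_eq_intros simp: assms)[1]
    using assms apply simp
    apply (rule ext)
    using assms apply (simp add: power2_eq_square)
    by algebra
  from frechet_derivative_at[OF this, symmetric] show ?thesis by simp
qed

lemma phi_tangent:
  fixes l l' t t' u :: real
  assumes "l > 0" "l' > 0"
  shows "exp (- (u*t'/l')) * (l - u*t + u*t'*l/l') \<le> l * exp (- (u*t/l))"
proof -
  define x where "x = - (u*t/l) + u*t'/l'"
  have e: "exp (- (u*t/l)) = exp (- (u*t'/l')) * exp x"
    unfolding x_def by (simp flip: exp_add)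
  have "1 + x \<le> exp x" by (rule exp_ge_add_one_self)
  hence "l * (1 + x) \<le> l * exp x"
    using assms by (intro mult_left_mono) auto
  hence 1: "exp (- (u*t'/l')) * (l*(1+x)) \<le> exp (- (u*t'/l')) * (l * exp x)"
    by (rule mult_left_mono) auto
  have 2: "l * (1 + x) = l - u*t + u*t'*l/l'"
    using assms unfolding x_def by (simp add: field_simps)
  have 3: "l * exp (- (u*t/l)) = exp (- (u*t'/l')) * (l * exp x)"
    unfolding e by (simp only: mult_ac)
  show ?thesis using 1 unfolding 2 3 .
qed

lemma pos_comb:
  fixes a b x y :: real
  assumes "x > 0" "y > 0" "a \<ge> 0" "b \<ge> 0" "a + b = 1"
  shows "a*x + b*y > 0"
proof (cases "a = 0")
  case True thus ?thesis using assms by simp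
next
  case False
  hence "a*x > 0" using assms by simp
  moreover have "b*y \<ge> 0" using assms by simp
  ultimately show ?thesis by linarith
qed

lemma phi_convex:
  fixes a b l1 l2 t1 t2 u :: real
  assumes "l1 > 0" "l2 > 0" "a \<ge> 0" "b \<ge> 0" "a + b = 1"
  shows "(a*l1+b*l2) * exp (- (u*(a*t1+b*t2)/(a*l1+b*l2)))
     \<le> a * (l1 * exp (- (u*t1/l1))) + b * (l2 * exp (- (u*t2/l2)))"
proof -
  define l where "l = a*l1+b*l2"
  define t where "t = a*t1+b*t2"
  define E where "E = exp (- (u*t/l))"
  have lp: "l > 0" unfolding l_def using pos_comb assms by blast
  have 1: "E * (l1 - u*t1 + u*t*l1/l) \<le> l1 * exp (- (u*t1/l1))"
    unfolding E_def using phi_tangent[OF assms(1) lp] .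
  have 2: "E * (l2 - u*t2 + u*t*l2/l) \<le> l2 * exp (- (u*t2/l2))"
    unfolding E_def using phi_tangent[OF assms(2) lp] .
  have "a * (E * (l1 - u*t1 + u*t*l1/l)) + b * (E * (l2 - u*t2 + u*t*l2/l))
      \<le> a * (l1 * exp (- (u*t1/l1))) + b * (l2 * exp (- (u*t2/l2)))"
    using 1 2 assms by (intro add_mono mult_left_mono) auto
  moreover have "a * (E * (l1 - u*t1 + u*t*l1/l)) + b * (E * (l2 - u*t2 + u*t*l2/l))
      = E * ((a*l1+b*l2) - u*(a*t1+b*t2) + u*t*(a*l1+b*l2)/l)"
    by (simp add: algebra_simps add_divide_distrib)
  moreover have "E * ((a*l1+b*l2) - u*(a*t1+b*t2) + u*t*(a*l1+b*l2)/l) = l * E"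
    using lp unfolding l_def[symmetric] t_def[symmetric] by simp
  ultimately have "l * E \<le> a * (l1 * exp (- (u*t1/l1))) + b * (l2 * exp (- (u*t2/l2)))"
    by linarith
  thus ?thesis unfolding E_def l_def t_def .
qed

lemma sq_convex:
  fixes a b p p1 p2 :: real
  assumes "0 \<le> p" "p \<le> a*p1 + b*p2" "a \<ge> 0" "b \<ge> 0" "a + b = 1"
  shows "p^2 \<le> a*p1^2 + b*p2^2"
proof -
  have "p^2 \<le> (a*p1+b*p2)^2" using assms by (intro power_mono) auto
  moreover have "a*p1^2 + b*p2^2 - (a*p1+b*p2)^2 = a*b*(p1-p2)^2"
  proof -
    have b: "b = 1 - a" using assms by simp
    show ?thesis unfolding b by (simp add: power2_eq_square algebra_simps)
  qed
  moreover have "a*b*(p1-p2)^2 \<ge> 0" using assms by simp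
  ultimately show ?thesis by linarith
qed

lemma combine:
  fixes a b c G G1 G2 H H1 H2 G0 H0 Lg Lg1 Lg2 Lh Lh1 Lh2 :: real
  assumes "a + b = 1" "c \<ge> 0" "G \<le> a*G1 + b*G2" "H \<le> a*H1 + b*H2"
    "Lg = a*Lg1 + b*Lg2" "Lh = a*Lh1 + b*Lh2"
  shows "G - G0 - Lg + c*(H - H0 - Lh) \<le>
     a*(G1 - G0 - Lg1 + c*(H1 - H0 - Lh1)) + b*(G2 - G0 - Lg2 + c*(H2 - H0 - Lh2))"
proof -
  have "c*H \<le> c*(a*H1 + b*H2)" using assms by (intro mult_left_mono) auto
  moreover have "a*(G1 - G0 - Lg1 + c*(H1 - H0 - Lh1)) + b*(G2 - G0 - Lg2 + c*(H2 - H0 - Lh2))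
     = (a*G1+b*G2) - G0 - (a*Lg1 + b*Lg2) + c*(a*H1 + b*H2) - c*H0 - c*(a*Lh1 + b*Lh2)"
  proof -
    have b: "b = 1 - a" using assms by simp
    show ?thesis unfolding b by (simp add: algebra_simps)
  qed
  ultimately show ?thesis using assms by (simp add: algebra_simps)
qed


lemma T_convex:
  fixes u c l1 k1 t1 l2 k2 t2 a b l' k' t' :: real
  assumes "l1 > 0" "l2 > 0" "k1 \<ge> 0" "k2 \<ge> 0" "l' > 0" "c \<ge> 0" "a \<ge> 0" "b \<ge> 0" "a + b = 1"
  shows "g_tilde (a*l1+b*l2, a*k1+b*k2, a*t1+b*t2) (l',k',t')
           + c * h_tilde u (a*l1+b*l2, a*k1+b*k2, a*t1+b*t2) (l',k',t')
         \<le> a * (g_tilde (l1,k1,t1) (l',k',t') + c * h_tilde u (l1,k1,t1) (l',k',t'))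
           + b * (g_tilde (l2,k2,t2) (l',k',t') + c * h_tilde u (l2,k2,t2) (l',k',t'))"
proof -
  have bb: "b = 1 - a" using assms by simp
  have G: "g_plus (a*l1+b*l2, a*k1+b*k2, a*t1+b*t2) \<le> a * g_plus (l1,k1,t1) + b * g_plus (l2,k2,t2)"
  proof -
    have "(a*k1+b*k2)^2 \<le> a*k1^2 + b*k2^2" using assms
      by (intro sq_convex) auto
    moreover have "(a*l1+b*l2)^2 \<le> a*l1^2 + b*l2^2" using assms
      by (intro sq_convex) auto
    moreover have "a*((k1^2+l1^2)/2) + b*((k2^2+l2^2)/2) = ((a*k1^2+b*k2^2) + (a*l1^2+b*l2^2))/2"
      by (simp add: field_simps)
    ultimately show ?thesis unfolding g_plus_def by simp
  qed
  have H: "h_plus u (a*l1+b*l2, a*k1+b*k2, a*t1+b*t2) \<le> a * h_plus u (l1,k1,t1) + b * h_plus u (l2,k2,t2)"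
  proof -
    have lp: "a*l1+b*l2 > 0" using pos_comb assms by blast
    have ph: "(a*l1+b*l2) * exp (- (u*(a*t1+b*t2)/(a*l1+b*l2)))
     \<le> a * (l1 * exp (- (u*t1/l1))) + b * (l2 * exp (- (u*t2/l2)))"
      using phi_convex assms by blast
    have "((a*k1+b*k2) + (a*l1+b*l2) * exp (- (u*(a*t1+b*t2)/(a*l1+b*l2))))^2
       \<le> a * (k1 + l1 * exp (- (u*t1/l1)))^2 + b * (k2 + l2 * exp (- (u*t2/l2)))^2"
    proof (rule sq_convex)
      show "0 \<le> (a*k1+b*k2) + (a*l1+b*l2) * exp (- (u*(a*t1+b*t2)/(a*l1+b*l2)))"
        using assms lp by (intro add_nonneg_nonneg) auto
      show "(a*k1+b*k2) + (a*l1+b*l2) * exp (- (u*(a*t1+b*t2)/(a*l1+b*l2)))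
        \<le> a * (k1 + l1 * exp (- (u*t1/l1))) + b * (k2 + l2 * exp (- (u*t2/l2)))"
        using ph by (simp add: algebra_simps)
    qed (use assms in auto)
    thus ?thesis unfolding h_plus_def by simp
  qed
  have Lg: "frechet_derivative g_minus (at (l',k',t')) ((a*l1+b*l2, a*k1+b*k2, a*t1+b*t2) - (l',k',t'))
     = a * frechet_derivative g_minus (at (l',k',t')) ((l1,k1,t1) - (l',k',t'))
     + b * frechet_derivative g_minus (at (l',k',t')) ((l2,k2,t2) - (l',k',t'))"
    unfolding gm_D bb by (simp add: algebra_simps)
  have Lh: "frechet_derivative (h_minus u) (at (l',k',t')) ((a*l1+b*l2, a*k1+b*k2, a*t1+b*t2) - (l',k',t'))
     = a * frechet_derivative (h_minus u) (at (l',k',t')) ((l1,k1,t1) - (l',k',t'))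
     + b * frechet_derivative (h_minus u) (at (l',k',t')) ((l2,k2,t2) - (l',k',t'))"
    unfolding hm_D[OF assms(5)] bb by (simp add: algebra_simps)
  show ?thesis unfolding g_tilde_def h_tilde_def
    by (rule combine[OF assms(9,6) G H Lg Lh])
qed

lemma T_lower:
  fixes u a l k t l' k' t' :: real
  assumes "l > 0" "l' > 0"
  shows "- (k * l * (1 - exp (- (u / l) * (t - a * l))))
     \<le> g_tilde (l,k,t) (l',k',t') + exp (u*a) * h_tilde u (l,k,t) (l',k',t')"
proof -
  have g: "g_tilde (l,k,t) (l',k',t') + k*l = ((k+l)-(k'+l'))^2/2"
    unfolding g_tilde_def gm_D g_plus_def g_minus_def
    by (simp add: power2_eq_square field_simps)
  have g': "g_tilde (l,k,t) (l',k',t') \<ge> - (k*l)" using g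
    by (smt (verit) zero_le_power2 divide_nonneg_pos)
  define E where "E = exp (- (u*t/l))"
  define E' where "E' = exp (- (u*t'/l'))"
  have E2: "exp (- (2*u*t/l)) = E^2" unfolding E_def power2_eq_square by (simp flip: exp_add)
  have E2': "exp (- (2*u*t'/l')) = E'^2" unfolding E'_def power2_eq_square by (simp flip: exp_add)
  have T: "E' * (l - u*t + u*t'*l/l') \<le> l * E"
    unfolding E_def E'_def by (rule phi_tangent[OF assms])
  have E'p: "E' > 0" unfolding E'_def by simp
  have id: "l' * E' * (E' * (l - u*t + u*t'*l/l') - l' * E') = E'^2 * ((l' + u*t') * (l - l') - u * l' * (t - t'))"
    using assms by (simp add: field_simps power2_eq_square)
  have "l' * E' * (E' * (l - u*t + u*t'*l/l')) \<le> l' * E' * (l * E)"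
    using T E'p assms by (intro mult_left_mono) auto
  define X where "X = E' * (l - u*t + u*t'*l/l')"
  have hp: "h_plus u (l,k,t) = (k + l*E)^2/2" by (simp add: h_plus_def E_def)
  have hm: "h_minus u (l',k',t') = (k'^2 + l'^2 * E'^2)/2" by (simp add: h_minus_def E2')
  have D: "frechet_derivative (h_minus u) (at (l',k',t')) ((l,k,t) - (l',k',t'))
     = k'*(k-k') + l' * E' * (X - l' * E')"
    unfolding X_def id by (simp add: hm_D[OF assms(2)] E2')
  have "h_tilde u (l,k,t) (l',k',t') - k * (l * E) = (k-k')^2/2 + ((l*E - l'*E')^2/2 + l'*E'*(l*E - X))"
    unfolding h_tilde_def hp hm D by (simp add: power2_eq_square field_simps)
  moreover have "l'*E'*(l*E - X) \<ge> 0" using T E'p assms unfolding X_def by simp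
  ultimately have h': "h_tilde u (l,k,t) (l',k',t') \<ge> k * (l * E)"
    by (smt (verit) zero_le_power2 divide_nonneg_pos)
  have ee: "exp (u*a) * E = exp (- (u / l) * (t - a * l))"
    unfolding E_def using assms by (simp add: field_simps flip: exp_add)
  have "exp (u*a) * (k * (l * E)) \<le> exp (u*a) * h_tilde u (l,k,t) (l',k',t')"
    using h' by (rule mult_left_mono) simp
  hence "k * l * exp (- (u / l) * (t - a * l)) \<le> exp (u*a) * h_tilde u (l,k,t) (l',k',t')"
    unfolding ee[symmetric] by (simp add: mult_ac)
  thus ?thesis using g' by (simp add: algebra_simps)
qed


lemma comb_01:
  fixes p q x y :: real
  assumes "0 \<le> x" "x \<le> 1" "0 \<le> y" "y \<le> 1" "p \<ge> 0" "q \<ge> 0" "p + q = 1"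
  shows "0 \<le> p*x + q*y" "p*x + q*y \<le> 1"
proof -
  show "0 \<le> p*x + q*y" using assms by simp
  have "p*x \<le> p" using assms mult_left_mono[of x 1 p] by simp
  moreover have "q*y \<le> q" using assms mult_left_mono[of y 1 q] by simp
  ultimately show "p*x + q*y \<le> 1" using assms by simp
qed

lemma convex_admissible: "convex (admissible :: ((real^'n) \<times> (real^'n) \<times> real) set)"
  unfolding convex_def
proof (intro ballI allI impI)
  fix x y :: "(real^'n) \<times> (real^'n) \<times> real" and p q :: real
  assume x: "x \<in> admissible" and y: "y \<in> admissible" and pq: "0 \<le> p" "0 \<le> q" "p + q = 1"
  obtain l1 k1 t1 where xd: "x = (l1,k1,t1)" by (cases x) auto
  obtain l2 k2 t2 where yd: "y = (l2,k2,t2)" by (cases y) auto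
  have h1: "\<forall>n. l1$n > 0 \<and> 0 \<le> k1$n \<and> k1$n \<le> 1" using x unfolding xd admissible_def by auto
  have h2: "\<forall>n. l2$n > 0 \<and> 0 \<le> k2$n \<and> k2$n \<le> 1" using y unfolding yd admissible_def by auto
  have "\<forall>n. p * l1$n + q * l2$n > 0 \<and> 0 \<le> p * k1$n + q * k2$n \<and> p * k1$n + q * k2$n \<le> 1"
  proof
    fix n
    show "p * l1$n + q * l2$n > 0 \<and> 0 \<le> p * k1$n + q * k2$n \<and> p * k1$n + q * k2$n \<le> 1"
      using h1[rule_format, of n] h2[rule_format, of n] pq pos_comb[of "l1$n" "l2$n" p q]
        comb_01[of "k1$n" "k2$n" p q] by simp
  qed
  thus "p *\<^sub>R x + q *\<^sub>R y \<in> admissible"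
    unfolding xd yd admissible_def by simp
qed


theorem lemma2:
  fixes L :: real and u a :: "real^'n"
  assumes "L > 0" and "\<forall>n. u$n > 0" and "\<forall>n. a$n > 0"
  shows "(\<forall>w\<in>admissible. \<forall>z\<in>admissible.
            L - expected_X u a (fst w) (fst (snd w)) (snd (snd w)) \<le> q_tilde L u a w z)
       \<and> (\<forall>z\<in>admissible. convex_on admissible (\<lambda>w. q_tilde L u a w z))"
proof (intro conjI ballI)
  fix w z :: "(real^'n) \<times> (real^'n) \<times> real"
  assume w: "w \<in> admissible" and z: "z \<in> admissible"
  obtain l k t where wd: "w = (l,k,t)" by (cases w) auto
  obtain l' k' t' where zd: "z = (l',k',t')" by (cases z) auto
  have lp: "\<forall>n. l$n > 0" using w unfolding wd admissible_def by auto
  have lp': "\<forall>n. l'$n > 0" using z unfolding zd admissible_def by auto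
  have "L - expected_X u a l k t
      = L + (\<Sum>n\<in>UNIV. - (k$n * l$n * (1 - exp (- (u$n / l$n) * (t - a$n * l$n)))))"
    unfolding expected_X_def sum_negf by linarith
  also have "\<dots> \<le> L + (\<Sum>n\<in>UNIV. g_tilde (l$n, k$n, t) (l'$n, k'$n, t')
                   + exp (u$n * a$n) * h_tilde (u$n) (l$n, k$n, t) (l'$n, k'$n, t'))"
    using lp lp' by (intro add_left_mono sum_mono T_lower) auto
  finally show "L - expected_X u a (fst w) (fst (snd w)) (snd (snd w)) \<le> q_tilde L u a w z"
    unfolding wd zd q_tilde_def by simp
next
  fix z :: "(real^'n) \<times> (real^'n) \<times> real"
  assume z: "z \<in> admissible"
  obtain l' k' t' where zd: "z = (l',k',t')" by (cases z) auto
  have lp': "\<forall>n. l'$n > 0" using z unfolding zd admissible_def by auto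
  show "convex_on admissible (\<lambda>w. q_tilde L u a w z)"
    unfolding convex_on_def
  proof (intro conjI convex_admissible ballI allI impI)
    fix x y :: "(real^'n) \<times> (real^'n) \<times> real" and p q :: real
    assume x: "x \<in> admissible" and y: "y \<in> admissible" and pq: "0 \<le> p" "0 \<le> q" "p + q = 1"
    obtain l1 k1 t1 where xd: "x = (l1,k1,t1)" by (cases x) auto
    obtain l2 k2 t2 where yd: "y = (l2,k2,t2)" by (cases y) auto
    have h1: "\<forall>n. l1$n > 0 \<and> 0 \<le> k1$n \<and> k1$n \<le> 1" using x unfolding xd admissible_def by auto
    have h2: "\<forall>n. l2$n > 0 \<and> 0 \<le> k2$n \<and> k2$n \<le> 1" using y unfolding yd admissible_def by auto
    let ?T = "\<lambda>n w. g_tilde w (l'$n, k'$n, t') + exp (u$n * a$n) * h_tilde (u$n) w (l'$n, k'$n, t')"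
    have "q_tilde L u a (p *\<^sub>R x + q *\<^sub>R y) z
        = L + (\<Sum>n\<in>UNIV. ?T n (p * l1$n + q * l2$n, p * k1$n + q * k2$n, p * t1 + q * t2))"
      unfolding xd yd zd q_tilde_def by simp
    also have "\<dots> \<le> L + (\<Sum>n\<in>UNIV. p * ?T n (l1$n, k1$n, t1) + q * ?T n (l2$n, k2$n, t2))"
      using h1 h2 lp' pq by (intro add_left_mono sum_mono T_convex) auto
    also have "\<dots> = p * (L + (\<Sum>n\<in>UNIV. ?T n (l1$n, k1$n, t1))) + q * (L + (\<Sum>n\<in>UNIV. ?T n (l2$n, k2$n, t2)))"
    proof -
      define SA where "SA = (\<Sum>n\<in>UNIV. ?T n (l1$n, k1$n, t1))"
      define SB where "SB = (\<Sum>n\<in>UNIV. ?T n (l2$n, k2$n, t2))"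
      have s: "(\<Sum>n\<in>UNIV. p * ?T n (l1$n, k1$n, t1) + q * ?T n (l2$n, k2$n, t2)) = p * SA + q * SB"
        unfolding SA_def SB_def sum_distrib_left by (rule sum.distrib)
      have d: "p * (L + SA) + q * (L + SB) = (p*L + q*L) + p*SA + q*SB"
        by (simp add: algebra_simps)
      have pl: "p*L + q*L = L" using pq(3) by (metis distrib_right mult_1)
      show ?thesis unfolding s SA_def[symmetric] SB_def[symmetric] d pl by simp
    qed
    also have "\<dots> = p * q_tilde L u a x z + q * q_tilde L u a y z"
      unfolding xd yd zd q_tilde_def by simp
    finally show "q_tilde L u a (p *\<^sub>R x + q *\<^sub>R y) z \<le> p * q_tilde L u a x z + q * q_tilde L u a y z" .
  qed
qed

end
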